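(* For any $n$-agent rank-based mechanism with allocation rule $x$ and any $\delta<1/n$: (1) $\sup_{q<\delta}x'(q)\le e\,x'(\delta)$, and (2) $\sup_{q>1-\delta}x'(q)\le e\,x'(1-\delta)$.
   Context: For $k\in\{1,\dots,n-1\}$ the $k$-highest-bids-win allocation rule in quantile space is $x_k(q)=\sum_{i=0}^{k-1}\binom{n-1}{i}q^{n-1-i}(1-q)^i$, with derivative $x_k'(q)=(n-1)\binom{n-2}{k-1}q^{n-k-1}(1-q)^{k-1}$; $x_0\equiv 0$, $x_n\equiv 1$. A rank-based mechanism with position weights $1\ge w_1\ge\cdots\ge w_n\ge 0$ ($w_{n+1}:=0$) has allocation rule $x(q)=\sum_{k=1}^{n}(w_k-w_{k+1})x_k(q)$, $q\in[0,1]$. *)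

theory Defs
  imports "HOL-Analysis.Analysis"
begin

text \<open>k-highest-bids-win allocation rule in quantile space (n agents):
  x_k(q) = sum_{i=0}^{k-1} (n-1 choose i) q^(n-1-i) (1-q)^i.
  In particular x_0 = 0 and x_n = 1.\<close>
definition khw_alloc :: "nat \<Rightarrow> nat \<Rightarrow> real \<Rightarrow> real" where
  "khw_alloc n k q = (\<Sum>i<k. real ((n - 1) choose i) * q ^ (n - 1 - i) * (1 - q) ^ i)"

text \<open>Position weights w_1 \<ge> ... \<ge> w_n, in [0,1], with w_{n+1} := 0.\<close>
definition rank_weights :: "nat \<Rightarrow> (nat \<Rightarrow> real) \<Rightarrow> bool" where
  "rank_weights n w \<longleftrightarrow> w 1 \<le> 1 \<and> (\<forall>k. 1 \<le> k \<and> k < n \<longrightarrow> w (Suc k) \<le> w k) \<and> 0 \<le> w n"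

definition rank_alloc :: "nat \<Rightarrow> (nat \<Rightarrow> real) \<Rightarrow> real \<Rightarrow> real" where
  "rank_alloc n w q = (\<Sum>k=1..n. (w k - (if k = n then 0 else w (Suc k))) * khw_alloc n k q)"

end

theory Submission
  imports Defs
begin

lemma term_deriv:
  "((\<lambda>q::real. q^a * (1-q)^b) has_real_derivative
     (real a * q^(a-1)*(1-q)^b - real b*q^a*(1-q)^(b-1))) (at q)"
  by (auto intro!: derivative_eq_intros simp: algebra_simps)

definition D :: "nat \<Rightarrow> nat \<Rightarrow> real \<Rightarrow> real" where
  "D n k q = (if k = 0 then 0 else real (n-1) * real ((n-2) choose (k-1)) * q^(n-1-k) * (1-q)^(k-1))"

lemma khw_deriv: "k \<le> n \<Longrightarrow> (khw_alloc n k has_real_derivative D n k q) (at q)"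
proof (induction k)
  case 0
  then show ?case by (simp add: khw_alloc_def D_def)
next
  case (Suc k)
  define m where "m = n - 1"
  have km: "k \<le> m" using Suc.prems m_def by simp
  have eq: "khw_alloc n (Suc k) = (\<lambda>q. khw_alloc n k q + real (m choose k) * (q^(m-k) * (1-q)^k))"
    by (rule ext) (simp add: khw_alloc_def m_def)
  have d: "(khw_alloc n (Suc k) has_real_derivative
     D n k q + real (m choose k) * (real (m-k) * q^(m-k-1)*(1-q)^k - real k*q^(m-k)*(1-q)^(k-1))) (at q)"
    unfolding eq using Suc term_deriv[of "m-k" k q]
    by (auto intro!: derivative_eq_intros)
  have "D n (Suc k) q = D n k q + real (m choose k) * (real (m-k) * q^(m-k-1)*(1-q)^k - real k*q^(m-k)*(1-q)^(k-1))"
  proof (cases k)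
    case 0 then show ?thesis by (simp add: D_def m_def)
  next
    case (Suc j)
    have i1: "real (m - k) * real (m choose k) = real m * real ((m-1) choose k)"
      using binomial_absorb_comp[of m k] by (metis of_nat_mult)
    have i2: "real k * real (m choose k) = real m * real ((m-1) choose j)"
      using times_binomial_minus1_eq[of k m] Suc by (metis diff_Suc_1 of_nat_mult zero_less_Suc)
    have n2: "n - 2 = m - 1" using m_def by simp
    have "D n (Suc k) q = real m * real ((m-1) choose k) * q^(m-k-1)*(1-q)^k"
      by (simp add: D_def m_def n2[unfolded m_def] Suc)
    also have "\<dots> = real m * real ((m-1) choose j) * q^(m-k)*(1-q)^j
        + real (m choose k) * (real (m-k) * q^(m-k-1)*(1-q)^k - real k*q^(m-k)*(1-q)^(k-1))"
    proof -
      have "real (m choose k) * (real (m-k) * q^(m-k-1)*(1-q)^k - real k*q^(m-k)*(1-q)^(k-1))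
        = (real (m - k) * real (m choose k)) * q^(m-k-1)*(1-q)^k - (real k * real (m choose k))*q^(m-k)*(1-q)^(k-1)"
        by (simp add: algebra_simps)
      also have "\<dots> = real m * real ((m-1) choose k) * q^(m-k-1)*(1-q)^k - real m * real ((m-1) choose j)*q^(m-k)*(1-q)^j"
        using i1 i2 Suc by simp
      finally show ?thesis by simp
    qed
    also have "real m * real ((m-1) choose j) * q^(m-k)*(1-q)^j = D n k q"
      using Suc by (simp add: D_def m_def n2[unfolded m_def])
    finally show ?thesis .
  qed
  then show ?case using d by simp
qed

lemma exp_bound:
  assumes "0 \<le> d" "real n * d < 1" "j < n"
  shows "1 \<le> exp 1 * (1-d)^j"
proof -
  have jd: "real (Suc j) * d \<le> real n * d" using assms by (intro mult_right_mono) auto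
  have "d \<le> real (Suc j) * d" using assms by (simp add: algebra_simps)
  hence d1: "d < 1" using assms jd by linarith
  define y where "y = d / (1-d)"
  have "1 + y \<le> exp y" by (rule exp_ge_add_one_self)
  moreover have "1 + y = 1/(1-d)" using d1 by (simp add: y_def field_simps)
  ultimately have "1 \<le> (1-d) * exp y" using d1 by (simp add: field_simps)
  hence "1 \<le> ((1-d) * exp y)^j" by (simp add: one_le_power)
  also have "\<dots> = (1-d)^j * exp (real j * y)" by (simp add: power_mult_distrib exp_of_nat_mult)
  also have "\<dots> \<le> (1-d)^j * exp 1"
  proof -
    have "real j * d \<le> 1 - d" using jd assms by (simp add: algebra_simps)
    hence "real j * y \<le> 1" using d1 by (simp add: y_def field_simps)
    thus ?thesis using d1 by (intro mult_left_mono) auto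
  qed
  finally show ?thesis by (simp add: mult.commute)
qed

lemma D_left:
  assumes "0 \<le> q" "q \<le> d" "real n * d < 1" "1 \<le> k" "k \<le> n"
  shows "D n k q \<le> exp 1 * D n k d"
proof -
  have e: "1 \<le> exp 1 * (1-d)^(k-1)" using assms by (intro exp_bound) auto
  have "real 1 * d \<le> real n * d" using assms by (intro mult_right_mono) auto
  hence d1: "d < 1" using assms by simp
  have a: "q^(n-1-k) \<le> d^(n-1-k)" using assms by (intro power_mono) auto
  have b: "(1-q)^(k-1) \<le> exp 1 * (1-d)^(k-1)"
    using e assms d1 power_le_one[of "1-q" "k-1"] by linarith
  have "q^(n-1-k) * (1-q)^(k-1) \<le> d^(n-1-k) * (exp 1 * (1-d)^(k-1))"
    using a b assms d1 by (intro mult_mono) auto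
  hence "real (n-1) * real ((n-2) choose (k-1)) * (q^(n-1-k) * (1-q)^(k-1))
     \<le> real (n-1) * real ((n-2) choose (k-1)) * (d^(n-1-k) * (exp 1 * (1-d)^(k-1)))"
    by (intro mult_left_mono) auto
  thus ?thesis using assms by (simp add: D_def algebra_simps)
qed

lemma D_right:
  assumes "1 - d \<le> q" "q \<le> 1" "0 \<le> d" "real n * d < 1" "1 \<le> k" "k \<le> n"
  shows "D n k q \<le> exp 1 * D n k (1-d)"
proof -
  have e: "1 \<le> exp 1 * (1-d)^(n-1-k)" using assms by (intro exp_bound) auto
  have "real 1 * d \<le> real n * d" using assms by (intro mult_right_mono) auto
  hence d1: "d < 1" using assms by simp
  have a: "(1-q)^(k-1) \<le> d^(k-1)" using assms by (intro power_mono) auto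
  have b: "q^(n-1-k) \<le> exp 1 * (1-d)^(n-1-k)"
    using e assms d1 power_le_one[of q "n-1-k"] by linarith
  have "q^(n-1-k) * (1-q)^(k-1) \<le> (exp 1 * (1-d)^(n-1-k)) * d^(k-1)"
    using a b assms d1 by (intro mult_mono) auto
  hence "real (n-1) * real ((n-2) choose (k-1)) * (q^(n-1-k) * (1-q)^(k-1))
     \<le> real (n-1) * real ((n-2) choose (k-1)) * ((exp 1 * (1-d)^(n-1-k)) * d^(k-1))"
    by (intro mult_left_mono) auto
  thus ?thesis using assms by (simp add: D_def algebra_simps)
qed

lemma rank_deriv:
  "deriv (rank_alloc n w) q = (\<Sum>k=1..n. (w k - (if k = n then 0 else w (Suc k))) * D n k q)"
proof -
  have "(rank_alloc n w has_real_derivative (\<Sum>k=1..n. (w k - (if k = n then 0 else w (Suc k))) * D n k q)) (at q)"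
    unfolding rank_alloc_def[abs_def]
    by (auto intro!: derivative_eq_intros khw_deriv simp: mult.commute)
  thus ?thesis by (rule DERIV_imp_deriv)
qed

theorem mainTheorem7:
  fixes n :: nat and w :: "nat \<Rightarrow> real" and \<delta> :: real
  assumes "n \<ge> 1"
    and "rank_weights n w"
    and "0 < \<delta>" and "\<delta> < 1 / real n"
  shows "(SUP q\<in>{0..<\<delta>}. deriv (rank_alloc n w) q) \<le> exp 1 * deriv (rank_alloc n w) \<delta>
       \<and> (SUP q\<in>{1 - \<delta><..1}. deriv (rank_alloc n w) q) \<le> exp 1 * deriv (rank_alloc n w) (1 - \<delta>)"
proof -
  have nd: "real n * \<delta> < 1" using assms by (simp add: field_simps)
  have "real 1 * \<delta> \<le> real n * \<delta>" using assms by (intro mult_right_mono) auto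
  hence d1: "\<delta> < 1" using nd by simp
  have c: "0 \<le> w k - (if k = n then 0 else w (Suc k))" if "k \<in> {1..n}" for k
    using assms(2) that unfolding rank_weights_def by auto
  have gen: "deriv (rank_alloc n w) q \<le> exp 1 * deriv (rank_alloc n w) p"
    if "\<And>k. k \<in> {1..n} \<Longrightarrow> D n k q \<le> exp 1 * D n k p" for q p
  proof -
    have "(\<Sum>k=1..n. (w k - (if k = n then 0 else w (Suc k))) * D n k q)
       \<le> (\<Sum>k=1..n. (w k - (if k = n then 0 else w (Suc k))) * (exp 1 * D n k p))"
      by (intro sum_mono mult_left_mono that c)
    also have "\<dots> = exp 1 * (\<Sum>k=1..n. (w k - (if k = n then 0 else w (Suc k))) * D n k p)"
      by (simp add: sum_distrib_left algebra_simps)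
    finally show ?thesis by (simp add: rank_deriv)
  qed
  show ?thesis
  proof
    show "(SUP q\<in>{0..<\<delta>}. deriv (rank_alloc n w) q) \<le> exp 1 * deriv (rank_alloc n w) \<delta>"
      using assms(3) by (intro cSUP_least gen D_left) (use nd in auto)
    show "(SUP q\<in>{1 - \<delta><..1}. deriv (rank_alloc n w) q) \<le> exp 1 * deriv (rank_alloc n w) (1 - \<delta>)"
      using assms(3) by (intro cSUP_least gen D_right) (use nd in auto)
  qed
qed

end
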